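(* Let $n\ge 1$ and let $f$ be a real-valued function on the product states of $\mathcal{H}_n=\otimes^n\mathbb{C}^2$ such that there is a constant $c$ with $\sum_{i=1}^{2^n} f(u_i)=c$ for every unentangled orthonormal basis (UOB) $\{u_1,\dots,u_{2^n}\}$ of $\mathcal{H}_n$. Then for each subset $J\subset\Omega_n=\{1,\dots,n\}$ there exists a function $\phi_J$ on $F^{n-|J|}$ (with $F^0=\{\omega\}$ and $\phi_{\Omega_n}(\omega)=c$) such that for every $z\in F_n$, \[ \sum_{L\subset J} f(\sigma_L(z))=\phi_J(\tau_J(z)). \]
   Context: One-qubit states are points of $\mathbb{P}^1(\mathbb{C})$, identified with $\mathbb{C}\cup\{\infty\}$ via $(x,y)\mapsto x/y$. Let $\sigma:\mathbb{C}^2\to\mathbb{C}^2$, $\sigma(x,y)=(-\bar y,\bar x)$; it induces on $\mathbb{C}\cup\{\infty\}$ the map $\sigma z=-1/\bar z$, and $\sigma v$ is (up to phase) the unique state orthogonal to $v$; write $\hat a=\sigma a$. The fundamental domain is $F=\{z\in\mathbb{C}:|z|<1\}\cup\{z\in\mathbb{C}:|z|=1,\ \operatorname{Im}z>0\}\cup\{1\}$. A product (unentangled) state of $\mathcal{H}_n$ is $z_1\otimes\cdots\otimes z_n$ with each $z_i$ a one-qubit state; $F_n=F\otimes\cdots\otimes F$ is the set of product states with all $z_i\in F$, and $F^m$ denotes the direct product of $m$ copies of $F$. A UOB of $\mathcal{H}_n$ is an orthonormal basis consisting of product unit vectors. For $J\subset\Omega_n$, $\sigma_J=T_1\otimes\cdots\otimes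 T_n$ with $T_j=\sigma$ if $j\in J$ and $T_j=\mathbb{I}$ otherwise. For $z=z_1\otimes\cdots\otimes z_n\in F_n$ and $J\ne\Omega_n$ with $\Omega_n\setminus J=\{i_1<\dots<i_k\}$, set $\tau_J(z)=(z_{i_1},\dots,z_{i_k})\in F^{k}$; for $J=\Omega_n$, $\tau_J(z)=\omega$. *)

theory Defs
  imports Complex_Main "HOL-Library.Sublist"
begin

text \<open>One-qubit states: points of P^1(C) = C \<union> {\<infinity>}, represented as complex option
  (None = \<infinity>).  A one-qubit vector is a pair (x,y) of complex numbers; its state is x/y.\<close>

type_synonym qstate = "complex option"

definition ratio :: "complex \<times> complex \<Rightarrow> qstate" where
  "ratio v = (if snd v = 0 then None else Some (fst v / snd v))"

definition sig :: "qstate \<Rightarrow> qstate" where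
  "sig p = (case p of None \<Rightarrow> Some 0
              | Some z \<Rightarrow> (if z = 0 then None else Some (- 1 / cnj z)))"

definition Fdom :: "qstate set" where
  "Fdom = {Some z | z. cmod z < 1 \<or> (cmod z = 1 \<and> Im z > 0) \<or> z = 1}"

text \<open>H_n: vectors are coefficient functions on bit strings of length n
  (computational basis); inner product is the standard one.\<close>
definition inner_n :: "nat \<Rightarrow> (bool list \<Rightarrow> complex) \<Rightarrow> (bool list \<Rightarrow> complex) \<Rightarrow> complex" where
  "inner_n n u v = (\<Sum>b\<in>{b. length b = n}. cnj (u b) * v b)"

definition tensor :: "(complex \<times> complex) list \<Rightarrow> bool list \<Rightarrow> complex" where
  "tensor qs b = (\<Prod>i<length qs. (if b ! i then snd (qs ! i) else fst (qs ! i)))"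

text \<open>An unentangled orthonormal basis of H_n, given as an indexed family
  u_1,...,u_{2^n} (indices 0..2^n-1) of product vectors, each presented by its
  list of n one-qubit factors.\<close>
definition is_UOB :: "nat \<Rightarrow> (nat \<Rightarrow> (complex \<times> complex) list) \<Rightarrow> bool" where
  "is_UOB n qs \<longleftrightarrow>
     (\<forall>i<2^n. length (qs i) = n) \<and>
     (\<forall>i<2^n. \<forall>j<2^n. inner_n n (tensor (qs i)) (tensor (qs j)) = (if i = j then 1 else 0)) \<and>
     (\<forall>v :: bool list \<Rightarrow> complex. \<exists>a :: nat \<Rightarrow> complex.
        \<forall>b. length b = n \<longrightarrow> v b = (\<Sum>i<2^n. a i * tensor (qs i) b))"

definition pstate :: "(complex \<times> complex) list \<Rightarrow> qstate list" where
  "pstate qs = map ratio qs"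

text \<open>sigma_L, for L \<subseteq> {1..n} (positions are 1-based).\<close>
definition sigmaL :: "nat set \<Rightarrow> qstate list \<Rightarrow> qstate list" where
  "sigmaL L z = map (\<lambda>i. if Suc i \<in> L then sig (z ! i) else z ! i) [0..<length z]"

text \<open>tau_J(z) = (z_i)_{i \<notin> J}, in increasing order; the empty list plays the role of \<omega>.\<close>
definition tauJ :: "nat set \<Rightarrow> qstate list \<Rightarrow> qstate list" where
  "tauJ J z = nths z {i. Suc i \<notin> J}"

end

theory Submission
  imports Defs "Jordan_Normal_Form.Determinant"
begin


definition bits :: "nat \<Rightarrow> nat \<Rightarrow> bool list" where
  "bits n r = map (bit r) [0..<n]"

lemma card_blists: "card {b::bool list. length b = n} = 2^n"
  using card_lists_length_eq[of "UNIV::bool set" n] by simp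

lemma finite_blists: "finite {b::bool list. length b = n}"
  using finite_lists_length_eq[of "UNIV::bool set" n] by simp

lemma bits_inj: "inj_on (bits n) {..<2^n}"
proof (rule inj_onI)
  fix r s assume r: "r \<in> {..<2^n}" and s: "s \<in> {..<2^n}" and e: "bits n r = bits n s"
  have "bit r k = bit s k" for k
  proof (cases "k < n")
    case True
    then show ?thesis using e unfolding bits_def by (metis map_eq_conv atLeastLessThan_iff set_upt zero_le)
  next
    case False
    have "take_bit n r = r" "take_bit n s = s" using r s by (auto simp: take_bit_nat_eq_self_iff)
    then show ?thesis using False by (metis bit_take_bit_iff)
  qed
  then show "r = s" by (simp add: bit_eq_iff)
qed

lemma bits_bij: "bij_betw (bits n) {..<2^n} {b. length b = n}"
proof -
  have sub: "bits n ` {..<2^n} \<subseteq> {b. length b = n}" by (auto simp: bits_def)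
  have "card (bits n ` {..<2^n}) = 2^n" using bits_inj card_image by fastforce
  then have "bits n ` {..<2^n} = {b. length b = n}"
    using sub by (simp add: card_subset_eq finite_blists card_blists)
  then show ?thesis using bits_inj by (simp add: bij_betw_def)
qed

lemma sum_bits: "(\<Sum>i<2^n. g (bits n i)) = (\<Sum>b\<in>{b. length b = n}. g b)"
  using sum.reindex_bij_betw[OF bits_bij, of g] by simp

lemma blists_Suc: "{b::bool list. length b = Suc n} = Cons False ` {b. length b = n} \<union> Cons True ` {b. length b = n}"
  by (auto simp: length_Suc_conv)

lemma sum_blists_Suc: "(\<Sum>b\<in>{b::bool list. length b = Suc n}. g b) = (\<Sum>b\<in>{b. length b = n}. g (False#b) + g (True#b))"
proof -
  have "(\<Sum>b\<in>{b::bool list. length b = Suc n}. g b) = sum g (Cons False ` {b. length b = n}) + sum g (Cons True ` {b. length b = n})"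
    unfolding blists_Suc by (rule sum.union_disjoint) (auto simp: finite_blists)
  also have "\<dots> = (\<Sum>b\<in>{b. length b = n}. g (False#b)) + (\<Sum>b\<in>{b. length b = n}. g (True#b))"
    by (simp add: sum.reindex)
  finally show ?thesis by (simp add: sum.distrib)
qed

lemma tensor_Cons: "tensor (q#qs) (x#b) = (if x then snd q else fst q) * tensor qs b"
proof -
  have "tensor (q#qs) (x#b) = (if x then snd q else fst q) *
     (\<Prod>i<length qs. (if (x#b) ! Suc i then snd ((q#qs) ! Suc i) else fst ((q#qs) ! Suc i)))"
    unfolding tensor_def by (simp only: length_Cons prod.lessThan_Suc_shift) simp
  also have "(\<Prod>i<length qs. (if (x#b) ! Suc i then snd ((q#qs) ! Suc i) else fst ((q#qs) ! Suc i))) = tensor qs b"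
    unfolding tensor_def by (rule prod.cong) auto
  finally show ?thesis .
qed

definition qinner :: "complex \<times> complex \<Rightarrow> complex \<times> complex \<Rightarrow> complex" where
  "qinner p q = cnj (fst p) * fst q + cnj (snd p) * snd q"

lemma inner_tensor: "length p = n \<Longrightarrow> length q = n \<Longrightarrow>
   inner_n n (tensor p) (tensor q) = (\<Prod>k<n. qinner (p!k) (q!k))"
proof (induction n arbitrary: p q)
  case 0
  then show ?case by (simp add: inner_n_def tensor_def)
next
  case (Suc n)
  then obtain a p' b q' where p: "p = a#p'" and q: "q = b#q'" and l: "length p' = n" "length q' = n"
    by (metis length_Suc_conv)
  have "inner_n (Suc n) (tensor p) (tensor q) =
     (\<Sum>c\<in>{c. length c = n}. cnj (fst a) * fst b * (cnj (tensor p' c) * tensor q' c)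
        + cnj (snd a) * snd b * (cnj (tensor p' c) * tensor q' c))"
    unfolding inner_n_def sum_blists_Suc p q tensor_Cons by (simp add: algebra_simps)
  also have "\<dots> = qinner a b * inner_n n (tensor p') (tensor q')"
    by (simp add: inner_n_def qinner_def sum_distrib_left algebra_simps sum.distrib)
  also have "\<dots> = (\<Prod>k<Suc n. qinner (p!k) (q!k))"
    using Suc.IH[OF l] p q by (simp add: prod.lessThan_Suc_shift del: prod.lessThan_Suc)
  finally show ?case .
qed

lemma orth_span:
  fixes u :: "nat \<Rightarrow> bool list \<Rightarrow> complex" and v :: "bool list \<Rightarrow> complex"
  assumes orth: "\<forall>i<2^n. \<forall>j<2^n. inner_n n (u i) (u j) = (if i = j then 1 else 0)"
  shows "\<exists>a. \<forall>b. length b = n \<longrightarrow> v b = (\<Sum>i<2^n. a i * u i b)"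
proof -
  define N where "N = (2::nat)^n"
  define A where "A = mat N N (\<lambda>(i,r). cnj (u i (bits n r)))"
  define B where "B = mat N N (\<lambda>(r,j). u j (bits n r))"
  have inn: "inner_n n x y = (\<Sum>r<N. cnj (x (bits n r)) * y (bits n r))" for x y
    unfolding inner_n_def N_def using sum_bits[where n=n and g="\<lambda>b. cnj (x b) * y b"] by simp
  have AB: "A * B = 1\<^sub>m N"
  proof (rule eq_matI)
    fix i j assume ij: "i < dim_row (1\<^sub>m N)" "j < dim_col (1\<^sub>m N)"
    then have "(A * B) $$ (i, j) = (\<Sum>r<N. cnj (u i (bits n r)) * u j (bits n r))"
      by (simp add: A_def B_def scalar_prod_def atLeast0LessThan)
    also have "\<dots> = inner_n n (u i) (u j)" by (simp add: inn)
    also have "\<dots> = 1\<^sub>m N $$ (i, j)" using orth ij by (simp add: N_def)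
    finally show "(A * B) $$ (i, j) = 1\<^sub>m N $$ (i, j)" .
  qed (auto simp: A_def B_def)
  have BA: "B * A = 1\<^sub>m N"
    by (rule mat_mult_left_right_inverse[OF _ _ AB]) (auto simp: A_def B_def)
  have comp: "(\<Sum>i<N. u i (bits n r) * cnj (u i (bits n s))) = (if r = s then 1 else 0)"
    if "r < N" "s < N" for r s
  proof -
    have "(B * A) $$ (r, s) = (\<Sum>i<N. u i (bits n r) * cnj (u i (bits n s)))"
      using that by (simp add: A_def B_def scalar_prod_def atLeast0LessThan)
    then show ?thesis using BA that by simp
  qed
  define a where "a i = inner_n n (u i) v" for i
  have "v b = (\<Sum>i<2^n. a i * u i b)" if b: "length b = n" for b
  proof -
    obtain r where r: "r < N" "b = bits n r"
      using bits_bij[of n] b unfolding bij_betw_def N_def by (metis (mono_tags, lifting) imageE lessThan_iff mem_Collect_eq)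
    have "(\<Sum>i<N. a i * u i b) = (\<Sum>i<N. \<Sum>s<N. v (bits n s) * (u i (bits n r) * cnj (u i (bits n s))))"
      unfolding a_def inn r(2) by (simp add: sum_distrib_left mult_ac)
    also have "\<dots> = (\<Sum>s<N. v (bits n s) * (\<Sum>i<N. u i (bits n r) * cnj (u i (bits n s))))"
      by (subst sum.swap) (simp add: sum_distrib_left)
    also have "\<dots> = (\<Sum>s<N. if s = r then v (bits n s) else 0)"
      by (rule sum.cong) (auto simp: comp r)
    also have "\<dots> = v b" using r by simp
    finally show ?thesis by (simp add: N_def)
  qed
  then show ?thesis by blast
qed



definition nrm :: "complex \<Rightarrow> complex" where
  "nrm a = complex_of_real (sqrt (1 + (cmod a)^2))"

definition ev :: "complex \<Rightarrow> bool \<Rightarrow> complex \<times> complex" where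
  "ev a x = (if x then (- 1 / nrm a, cnj a / nrm a) else (a / nrm a, 1 / nrm a))"

lemma nrm_ne: "nrm a \<noteq> 0"
  unfolding nrm_def by (smt (verit) of_real_eq_0_iff real_sqrt_gt_zero zero_le_power2)

lemma cnj_nrm: "cnj (nrm a) = nrm a"
  unfolding nrm_def by simp

lemma nrm_sq: "nrm a * nrm a = 1 + a * cnj a"
proof -
  have "nrm a * nrm a = complex_of_real (1 + (cmod a)^2)"
    unfolding nrm_def by (simp flip: of_real_mult)
  also have "\<dots> = 1 + a * cnj a" using complex_norm_square[of a] by simp
  finally show ?thesis .
qed

lemma qinner_ev: "qinner (ev a x) (ev a y) = (if x = y then 1 else 0)"
proof -
  have n: "nrm a \<noteq> 0" by (rule nrm_ne)
  have c: "cnj (nrm a) = nrm a" by (rule cnj_nrm)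
  have s: "nrm a * nrm a = 1 + a * cnj a" by (rule nrm_sq)
  have d: "1 + a * cnj a \<noteq> 0" using n s by (metis mult_eq_0_iff)
  show ?thesis
    using n s d unfolding qinner_def ev_def
    by (auto simp: c field_simps)
qed

lemma ratio_ev: "ratio (ev a x) = (if x then sig (Some a) else Some a)"
  using nrm_ne[of a] unfolding ratio_def ev_def sig_def by (auto simp: field_simps)



definition allK :: "nat \<Rightarrow> nat set \<Rightarrow> bool list \<Rightarrow> bool" where
  "allK n J b = (\<forall>k<n. Suc k \<notin> J \<longrightarrow> \<not> b!k)"
definition ak :: "nat \<Rightarrow> nat set \<Rightarrow> qstate list \<Rightarrow> bool list \<Rightarrow> nat \<Rightarrow> complex" where
  "ak n J z b k = (if Suc k \<in> J \<and> \<not> allK n J b then 0 else the (z!k))"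
definition build :: "nat \<Rightarrow> nat set \<Rightarrow> qstate list \<Rightarrow> bool list \<Rightarrow> (complex \<times> complex) list" where
  "build n J z b = map (\<lambda>k. ev (ak n J z b k) (b!k)) [0..<n]"
definition Pz :: "nat \<Rightarrow> nat set \<Rightarrow> qstate list \<Rightarrow> bool list \<Rightarrow> qstate list" where
  "Pz n J z b = map (\<lambda>k. if b!k then sig (Some (if Suc k \<in> J then 0 else the (z!k)))
                           else Some (if Suc k \<in> J then 0 else the (z!k))) [0..<n]"
definition hL :: "nat \<Rightarrow> nat set \<Rightarrow> bool list" where
  "hL n L = map (\<lambda>k. Suc k \<in> L) [0..<n]"

lemma uob: "is_UOB n (\<lambda>i. build n J z (bits n i))"
proof -
  have len: "length (build n J z b) = n" for b by (simp add: build_def)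
  have inner: "inner_n n (tensor (build n J z b)) (tensor (build n J z b')) =
     (\<Prod>k<n. qinner (ev (ak n J z b k) (b!k)) (ev (ak n J z b' k) (b'!k)))" for b b'
    by (simp add: inner_tensor len build_def)
  have orth: "inner_n n (tensor (build n J z (bits n i))) (tensor (build n J z (bits n j))) = (if i = j then 1 else 0)"
    if ij: "i < 2^n" "j < 2^n" for i j
  proof (cases "i = j")
    case True
    then show ?thesis by (simp add: inner qinner_ev)
  next
    case False
    let ?b = "bits n i" and ?c = "bits n j"
    have "?b \<noteq> ?c"
    proof
      assume "?b = ?c"
      then have "i = j" using bits_inj[of n] ij unfolding inj_on_def by blast
      then show False using False by simp
    qed
    moreover have "length ?b = n" "length ?c = n" by (simp_all add: bits_def)
    moreover have "\<exists>k<n. ?b!k \<noteq> ?c!k"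
    proof (rule ccontr)
      assume "\<not> (\<exists>k<n. ?b!k \<noteq> ?c!k)"
      then have "?b = ?c" by (intro nth_equalityI) (auto simp: bits_def)
      then show False using \<open>?b \<noteq> ?c\<close> by simp
    qed
    ultimately obtain k where k: "k < n" "?b!k \<noteq> ?c!k" by blast
    have "\<exists>k<n. qinner (ev (ak n J z ?b k) (?b!k)) (ev (ak n J z ?c k) (?c!k)) = 0"
    proof (cases "\<exists>k<n. Suc k \<notin> J \<and> ?b!k \<noteq> ?c!k")
      case True
      then obtain k where "k<n" "Suc k \<notin> J" "?b!k \<noteq> ?c!k" by blast
      then show ?thesis by (intro exI[of _ k]) (simp add: ak_def qinner_ev)
    next
      case False
      then have "allK n J ?b = allK n J ?c" unfolding allK_def by auto
      then have "ak n J z ?b k = ak n J z ?c k" by (simp add: ak_def)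
      then show ?thesis using k by (intro exI[of _ k]) (simp add: qinner_ev)
    qed
    then show ?thesis using False by (simp add: inner) (metis lessThan_iff)
  qed
  have sp: "\<forall>v. \<exists>a. \<forall>b. length b = n \<longrightarrow> v b = (\<Sum>i<2^n. a i * tensor (build n J z (bits n i)) b)"
  proof
    fix v :: "bool list \<Rightarrow> complex"
    show "\<exists>a. \<forall>b. length b = n \<longrightarrow> v b = (\<Sum>i<2^n. a i * tensor (build n J z (bits n i)) b)"
      by (rule orth_span) (use orth in blast)
  qed
  show ?thesis unfolding is_UOB_def
    using orth sp len by blast
qed


lemma hL_bij: assumes "J \<subseteq> {1..n}"
  shows "bij_betw (hL n) (Pow J) {b. length b = n \<and> allK n J b}"
proof -
  have inj: "inj_on (hL n) (Pow J)"
  proof (rule inj_onI)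
    fix L L' assume L: "L \<in> Pow J" "L' \<in> Pow J" and e: "hL n L = hL n L'"
    have "x \<in> L \<longleftrightarrow> x \<in> L'" for x
    proof (cases "x \<in> {1..n}")
      case True
      then obtain k where "x = Suc k" "k < n" by (cases x) auto
      then show ?thesis using e unfolding hL_def by (metis (no_types, lifting) diff_zero length_map length_upt nth_map nth_upt plus_nat.add_0)
    next
      case False then show ?thesis using L assms by auto
    qed
    then show "L = L'" by blast
  qed
  have img: "hL n ` Pow J = {b. length b = n \<and> allK n J b}"
  proof
    show "hL n ` Pow J \<subseteq> {b. length b = n \<and> allK n J b}"
      by (auto simp: hL_def allK_def)
  next
    show "{b. length b = n \<and> allK n J b} \<subseteq> hL n ` Pow J"
    proof
      fix b assume b: "b \<in> {b. length b = n \<and> allK n J b}"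
      define L where "L = {Suc k | k. k < n \<and> b!k}"
      have "L \<in> Pow J" using b unfolding L_def allK_def by auto
      moreover have "hL n L = b"
        using b unfolding hL_def L_def by (intro nth_equalityI) auto
      ultimately show "b \<in> hL n ` Pow J" by blast
    qed
  qed
  show ?thesis using inj img by (simp add: bij_betw_def)
qed



lemma some_the: assumes "set z \<subseteq> Fdom" "k < length z" shows "Some (the (z!k)) = z!k"
proof -
  have "z!k \<in> Fdom" using assms by auto
  then show ?thesis unfolding Fdom_def by auto
qed

lemma main_sum:
  assumes hyp: "\<forall>qs. is_UOB n qs \<longrightarrow> (\<Sum>i<2^n. f (pstate (qs i))) = c"
    and J: "J \<subseteq> {1..n}" and z: "length z = n" "set z \<subseteq> Fdom"
  shows "(\<Sum>L\<in>Pow J. f (sigmaL L z)) + (\<Sum>b\<in>{b. length b = n \<and> \<not> allK n J b}. f (Pz n J z b)) = c"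
proof -
  let ?B = "{b::bool list. length b = n}"
  have pst: "pstate (build n J z b) = map (\<lambda>k. if b!k then sig (Some (ak n J z b k)) else Some (ak n J z b k)) [0..<n]" for b
    by (simp add: pstate_def build_def ratio_ev)
  have "c = (\<Sum>i<2^n. f (pstate (build n J z (bits n i))))" using hyp[rule_format, OF uob[of n J z]] by simp
  also have "\<dots> = (\<Sum>b\<in>?B. f (pstate (build n J z b)))" by (rule sum_bits)
  also have "\<dots> = (\<Sum>b\<in>?B \<inter> {b. allK n J b}. f (pstate (build n J z b))) + (\<Sum>b\<in>?B - {b. allK n J b}. f (pstate (build n J z b)))"
    by (rule sum.Int_Diff[OF finite_blists])
  also have "(\<Sum>b\<in>?B \<inter> {b. allK n J b}. f (pstate (build n J z b))) = (\<Sum>L\<in>Pow J. f (sigmaL L z))"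
  proof -
    have "(\<Sum>L\<in>Pow J. f (pstate (build n J z (hL n L)))) = (\<Sum>b\<in>{b. length b = n \<and> allK n J b}. f (pstate (build n J z b)))"
      by (rule sum.reindex_bij_betw[OF hL_bij[OF J]])
    moreover have "pstate (build n J z (hL n L)) = sigmaL L z" if "L \<in> Pow J" for L
    proof -
      have aK: "allK n J (hL n L)" using that by (auto simp: allK_def hL_def)
      show ?thesis unfolding pst sigmaL_def z(1)
        by (rule map_cong) (use aK some_the[OF z(2)] z(1) in \<open>auto simp: ak_def hL_def\<close>)
    qed
    moreover have "?B \<inter> {b. allK n J b} = {b. length b = n \<and> allK n J b}" by blast
    ultimately show ?thesis by (metis (no_types, lifting) sum.cong)
  qed
  also have "(\<Sum>b\<in>?B - {b. allK n J b}. f (pstate (build n J z b))) = (\<Sum>b\<in>{b. length b = n \<and> \<not> allK n J b}. f (Pz n J z b))"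
  proof (rule sum.cong)
    show "?B - {b. allK n J b} = {b. length b = n \<and> \<not> allK n J b}" by auto
  next
    fix b assume "b \<in> {b. length b = n \<and> \<not> allK n J b}"
    then show "f (pstate (build n J z b)) = f (Pz n J z b)"
      unfolding pst Pz_def ak_def by (intro arg_cong[where f=f] map_cong) auto
  qed
  finally show ?thesis by simp
qed


lemma nths_agree: "nths xs I = nths ys I \<Longrightarrow> length xs = length ys \<Longrightarrow> k < length xs \<Longrightarrow> k \<in> I \<Longrightarrow> xs!k = ys!k"
proof (induction xs arbitrary: ys I k)
  case Nil then show ?case by simp
next
  case (Cons x xs)
  then obtain y ys' where ys: "ys = y#ys'" by (cases ys) auto
  have e: "(if 0 \<in> I then [x] else []) @ nths xs {j. Suc j \<in> I} = (if 0 \<in> I then [y] else []) @ nths ys' {j. Suc j \<in> I}"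
    using Cons.prems(1) unfolding ys nths_Cons .
  show ?case
  proof (cases k)
    case 0 then show ?thesis using e Cons.prems ys by (auto split: if_splits)
  next
    case (Suc k')
    have "nths xs {j. Suc j \<in> I} = nths ys' {j. Suc j \<in> I}" using e by (auto split: if_splits)
    moreover have "length xs = length ys'" "k' < length xs" "k' \<in> {j. Suc j \<in> I}"
      using Cons.prems ys Suc by auto
    ultimately have "xs!k' = ys'!k'" by (rule Cons.IH)
    then show ?thesis using ys Suc by simp
  qed
qed



lemma Pz_agree:
  assumes "length z = n" "length z' = n" "\<forall>k<n. Suc k \<notin> J \<longrightarrow> z!k = z'!k"
  shows "Pz n J z b = Pz n J z' b"
  unfolding Pz_def using assms by (intro map_cong) auto

theorem lemma1:
  fixes n :: nat and f :: "qstate list \<Rightarrow> real" and c :: real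
  assumes "n \<ge> 1"
    and "\<forall>qs. is_UOB n qs \<longrightarrow> (\<Sum>i<2^n. f (pstate (qs i))) = c"
  shows "\<forall>J. J \<subseteq> {1..n} \<longrightarrow>
           (\<exists>\<phi> :: qstate list \<Rightarrow> real.
              (J = {1..n} \<longrightarrow> \<phi> [] = c) \<and>
              (\<forall>z. length z = n \<and> set z \<subseteq> Fdom \<longrightarrow>
                 (\<Sum>L\<in>Pow J. f (sigmaL L z)) = \<phi> (tauJ J z)))"
proof (intro allI impI)
  fix J assume J: "J \<subseteq> {1..n}"
  define V where "V z \<longleftrightarrow> length z = n \<and> set z \<subseteq> Fdom" for z
  define S where "S z = (\<Sum>L\<in>Pow J. f (sigmaL L z))" for z
  define R where "R z = (\<Sum>b\<in>{b. length b = n \<and> \<not> allK n J b}. f (Pz n J z b))" for z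
  have SR: "S z + R z = c" if "V z" for z
    using main_sum[OF assms(2) J] that unfolding V_def S_def R_def by blast
  have Req: "R z = R z'" if "V z" "V z'" "tauJ J z = tauJ J z'" for z z'
  proof -
    have "\<forall>k<n. Suc k \<notin> J \<longrightarrow> z!k = z'!k"
      using nths_agree[of z "{i. Suc i \<notin> J}" z'] that unfolding V_def tauJ_def by auto
    then show ?thesis unfolding R_def using that Pz_agree unfolding V_def by (metis (no_types, lifting))
  qed
  define \<phi> where "\<phi> t = (if \<exists>z. V z \<and> tauJ J z = t then S (SOME z. V z \<and> tauJ J z = t) else c)" for t
  have main: "S z = \<phi> (tauJ J z)" if "V z" for z
  proof -
    have ex: "\<exists>z'. V z' \<and> tauJ J z' = tauJ J z" using that by blast
    define z' where "z' = (SOME z'. V z' \<and> tauJ J z' = tauJ J z)"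
    have z': "V z'" "tauJ J z' = tauJ J z" using someI_ex[OF ex] unfolding z'_def by auto
    have "S z = c - R z" using SR[OF that] by simp
    also have "\<dots> = c - R z'" using Req[OF that z'(1) z'(2)[symmetric]] by simp
    also have "\<dots> = S z'" using SR[OF z'(1)] by simp
    finally show ?thesis unfolding \<phi>_def z'_def using ex by simp
  qed
  have top: "\<phi> [] = c" if "J = {1..n}"
  proof (cases "\<exists>z. V z \<and> tauJ J z = []")
    case True
    then obtain z where z: "V z" "tauJ J z = []" by blast
    have "{b. length b = n \<and> \<not> allK n J b} = {}" using that by (auto simp: allK_def)
    then have "R z = 0" unfolding R_def by (metis sum.empty)
    then show ?thesis using main[OF z(1)] SR[OF z(1)] z(2) by simp
  next
    case False
    then have "\<not> (\<exists>z. V z \<and> tauJ J z = [])" by blast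
    then show ?thesis unfolding \<phi>_def by (simp only: if_False)
  qed
  show "\<exists>\<phi> :: qstate list \<Rightarrow> real. (J = {1..n} \<longrightarrow> \<phi> [] = c) \<and>
              (\<forall>z. length z = n \<and> set z \<subseteq> Fdom \<longrightarrow> (\<Sum>L\<in>Pow J. f (sigmaL L z)) = \<phi> (tauJ J z))"
    using top main unfolding V_def S_def by blast
qed

end
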